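(* Fix $b>0$, $c>0$ and $0<\theta<c$, and let the parameter $a\in\mathbb R$ vary. Consider the two-player complete-information contest with efforts $x,y\ge 0$, payoffs $P(x,y)-\theta x$ and $1-P(x,y)-\theta y$, where $P(x,y)=\tfrac12+(x-y)\bigl(c-b(x+y)+axy\bigr)$ (no truncation). Define the pure-equilibrium region $\{a: b^2\ge a(c-\theta)\}$ (equivalently $a=0$ or $\zeta(a):=\frac{b^2-a(c-\theta)}{a^2}\ge 0$) and the mixed-equilibrium region $\{a: b^2<a(c-\theta)\}$ (equivalently $\zeta(a)<0$). Define equilibrium effort $e(a)$ by: $e(a)=\frac{b-\sqrt{b^2-a(c-\theta)}}{a}$ for $a\neq0$ in the pure region, $e(0)=\frac{c-\theta}{2b}$, and $e(a)=b/a$ on the mixed region (the common mean effort of every mixed equilibrium there). Then $e$ is increasing on the pure-equilibrium region and decreasing on the mixed-equilibrium region. Hence equilibrium effort is maximized at the boundary $\zeta=0$, i.e. at $a$ with $b^2=a(c-\theta)$.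
   Context: On the pure region the unique equilibrium of this contest is the symmetric pure profile with effort $e(a)$ (for $a=0$ each player has the dominant strategy $(c-\theta)/(2b)$); on the mixed region every mixed equilibrium has both players' mean effort equal to $b/a$. *)

theory Defs
  imports Complex_Main
begin

definition win_prob :: "real \<Rightarrow> real \<Rightarrow> real \<Rightarrow> real \<Rightarrow> real \<Rightarrow> real" where
  "win_prob a b c x y = 1/2 + (x - y) * (c - b * (x + y) + a * x * y)"

definition zeta :: "real \<Rightarrow> real \<Rightarrow> real \<Rightarrow> real \<Rightarrow> real" where
  "zeta b c \<theta> a = (b^2 - a * (c - \<theta>)) / a^2"

definition pure_region :: "real \<Rightarrow> real \<Rightarrow> real \<Rightarrow> real set" where
  "pure_region b c \<theta> = {a. b^2 \<ge> a * (c - \<theta>)}"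

definition mixed_region :: "real \<Rightarrow> real \<Rightarrow> real \<Rightarrow> real set" where
  "mixed_region b c \<theta> = {a. b^2 < a * (c - \<theta>)}"

definition eq_effort :: "real \<Rightarrow> real \<Rightarrow> real \<Rightarrow> real \<Rightarrow> real" where
  "eq_effort b c \<theta> a =
     (if a = 0 then (c - \<theta>) / (2 * b)
      else if b^2 \<ge> a * (c - \<theta>) then (b - sqrt (b^2 - a * (c - \<theta>))) / a
      else b / a)"

end

theory Submission
  imports Defs
begin

lemma eff_pure:
  fixes b c \<theta> a :: real
  assumes "b > 0" "\<theta> < c" "b^2 \<ge> a * (c - \<theta>)"
  shows "eq_effort b c \<theta> a = (c - \<theta>) / (b + sqrt (b^2 - a * (c - \<theta>)))"
proof (cases "a = 0")
  case True then show ?thesis using assms by (simp add: eq_effort_def)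
next
  case False
  define s where "s = sqrt (b^2 - a * (c - \<theta>))"
  have s0: "s \<ge> 0" unfolding s_def using assms(3) by simp
  have ss: "s^2 = b^2 - a * (c - \<theta>)" unfolding s_def using assms by simp
  have bs: "b + s > 0" using s0 assms by simp
  have "(b - s) * (b + s) = b^2 - s^2" by (simp add: power2_eq_square algebra_simps)
  also have "\<dots> = a * (c - \<theta>)" using ss by simp
  finally have pr: "(b - s) * (b + s) = a * (c - \<theta>)" .
  have "(b - s) / a = (c - \<theta>) / (b + s)"
    using False bs pr by (simp add: frac_eq_eq mult.commute)
  then show ?thesis using False assms by (simp add: eq_effort_def s_def)
qed

lemma eff_mixed:
  fixes b c \<theta> a :: real
  assumes "b > 0" "\<theta> < c" "b^2 < a * (c - \<theta>)"
  shows "eq_effort b c \<theta> a = b / a"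
proof -
  have "a \<noteq> 0"
  proof
    assume "a = 0" then show False using assms(3) by simp
  qed
  then show ?thesis using assms by (simp add: eq_effort_def)
qed

theorem theorem2:
  fixes b c \<theta> :: real
  assumes "b > 0" and "c > 0" and "0 < \<theta>" and "\<theta> < c"
  shows "(\<forall>a1\<in>pure_region b c \<theta>. \<forall>a2\<in>pure_region b c \<theta>.
            a1 < a2 \<longrightarrow> eq_effort b c \<theta> a1 < eq_effort b c \<theta> a2)
       \<and> (\<forall>a1\<in>mixed_region b c \<theta>. \<forall>a2\<in>mixed_region b c \<theta>.
            a1 < a2 \<longrightarrow> eq_effort b c \<theta> a1 > eq_effort b c \<theta> a2)
       \<and> (\<forall>a0. b^2 = a0 * (c - \<theta>) \<longrightarrow> (\<forall>a. eq_effort b c \<theta> a \<le> eq_effort b c \<theta> a0))"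
proof (intro conjI ballI impI allI)
  have k: "c - \<theta> > 0" using assms by simp
  fix a1 a2 assume p1: "a1 \<in> pure_region b c \<theta>" and p2: "a2 \<in> pure_region b c \<theta>" and lt: "a1 < a2"
  have h1: "b^2 \<ge> a1 * (c - \<theta>)" "b^2 \<ge> a2 * (c - \<theta>)" using p1 p2 by (auto simp: pure_region_def)
  have "a1 * (c - \<theta>) < a2 * (c - \<theta>)" using lt k by simp
  then have "sqrt (b^2 - a2 * (c - \<theta>)) < sqrt (b^2 - a1 * (c - \<theta>))" by simp
  moreover have s2: "sqrt (b^2 - a2 * (c - \<theta>)) \<ge> 0" using h1(2) by simp
  moreover have s1: "sqrt (b^2 - a1 * (c - \<theta>)) \<ge> 0" using h1(1) by simp
  ultimately have "(c - \<theta>) / (b + sqrt (b^2 - a1 * (c - \<theta>))) < (c - \<theta>) / (b + sqrt (b^2 - a2 * (c - \<theta>)))"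
    using k assms(1) by (intro divide_strict_left_mono) (auto intro!: mult_pos_pos add_pos_nonneg)
  then show "eq_effort b c \<theta> a1 < eq_effort b c \<theta> a2"
    using eff_pure[OF assms(1) assms(4) h1(1)] eff_pure[OF assms(1) assms(4) h1(2)] by simp
next
  have k: "c - \<theta> > 0" using assms by simp
  fix a1 a2 assume p1: "a1 \<in> mixed_region b c \<theta>" and p2: "a2 \<in> mixed_region b c \<theta>" and lt: "a1 < a2"
  have h1: "b^2 < a1 * (c - \<theta>)" "b^2 < a2 * (c - \<theta>)" using p1 p2 by (auto simp: mixed_region_def)
  have "0 < a1 * (c - \<theta>)" using h1(1) zero_le_power2[of b] by linarith
  then have "a1 > 0" using k by (simp add: zero_less_mult_iff)
  then have "b / a2 < b / a1" using lt assms(1) by (simp add: divide_strict_left_mono)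
  then show "eq_effort b c \<theta> a1 > eq_effort b c \<theta> a2"
    using eff_mixed[OF assms(1) assms(4) h1(1)] eff_mixed[OF assms(1) assms(4) h1(2)] by simp
next
  have k: "c - \<theta> > 0" using assms by simp
  fix a0 a assume a0: "b^2 = a0 * (c - \<theta>)"
  have e0: "eq_effort b c \<theta> a0 = (c - \<theta>) / b"
    using eff_pure[OF assms(1) assms(4), of a0] a0 by simp
  have "0 < a0 * (c - \<theta>)" using a0 assms(1) by (metis zero_less_power2 less_irrefl)
  then have a0p: "a0 > 0" using k by (simp add: zero_less_mult_iff)
  show "eq_effort b c \<theta> a \<le> eq_effort b c \<theta> a0"
  proof (cases "b^2 \<ge> a * (c - \<theta>)")
    case True
    have "(c - \<theta>) / (b + sqrt (b^2 - a * (c - \<theta>))) \<le> (c - \<theta>) / b"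
      using k assms(1) True by (intro divide_left_mono) (auto intro!: mult_pos_pos add_pos_nonneg)
    then show ?thesis using eff_pure[OF assms(1) assms(4) True] e0 by simp
  next
    case False
    then have "a0 * (c - \<theta>) < a * (c - \<theta>)" using a0 by simp
    then have "a0 < a" using k by simp
    then have "b / a < b / a0" using a0p assms(1) by (simp add: divide_strict_left_mono)
    moreover have "b / a0 = (c - \<theta>) / b" using a0 a0p assms(1) k
      by (simp add: frac_eq_eq power2_eq_square mult.commute)
    ultimately show ?thesis using eff_mixed[OF assms(1) assms(4)] False e0 by simp
  qed
qed

end
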